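(* Let $G$ be a connected Lie group with identity $e$ and consider a discrete-time linear control system on $G$ with control range $U\subset\mathbb{R}^m$ a compact neighborhood of $0$. Let $g\in\mathcal{R}$ be such that $f_0^k(g)\in\mathcal{R}$ for all $k\in\mathbb{Z}$. Then $\mathcal{R}\cdot g\subset\mathcal{R}$.
   Context: A discrete-time linear control system on $G$ is given by $f:G\times U\to G$, $f_u:=f(\cdot,u)$, such that $f_0$ is an automorphism of $G$ and $f_u(g)=f_u(e)f_0(g)$ for all $g\in G,u\in U$. Solutions: $\varphi(0,g,u)=g$, $\varphi(k,g,u)=f_{u_{k-1}}\circ\cdots\circ f_{u_0}(g)$ for $u=(u_i)\in U^{\mathbb{N}_0}$; $\mathcal{R}=\bigcup_{k\in\mathbb{N}}\{\varphi(k,e,u)\}$. *)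

theory Defs
  imports "HOL-Analysis.Analysis" "HOL-Algebra.Group"
begin

text \<open>A connected Lie group is modelled as a HOL-Algebra group G whose carrier
carries a topology T making it a connected Hausdorff topological group that is
locally Euclidean of dimension CARD('n). (Smooth structure cannot be expressed.)\<close>

definition connected_loc_euclidean_group ::
  "('g, 'b) monoid_scheme \<Rightarrow> 'g topology \<Rightarrow> 'n::finite itself \<Rightarrow> bool" where
  "connected_loc_euclidean_group G T (_::'n itself) \<longleftrightarrow>
     group G \<and> topspace T = carrier G \<and>
     continuous_map (prod_topology T T) T (\<lambda>(x, y). x \<otimes>\<^bsub>G\<^esub> y) \<and>
     continuous_map T T (\<lambda>x. inv\<^bsub>G\<^esub> x) \<and>
     Hausdorff_space T \<and> connected_space T \<and>
     (\<forall>x\<in>topspace T. \<exists>V W. openin T V \<and> x \<in> V \<and> open (W :: (real^'n) set) \<and>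
         (subtopology T V) homeomorphic_space (subtopology euclidean W))"

definition linear_control_system ::
  "('g, 'b) monoid_scheme \<Rightarrow> 'g topology \<Rightarrow> (real^'m) set \<Rightarrow> ('g \<Rightarrow> real^'m \<Rightarrow> 'g) \<Rightarrow> bool" where
  "linear_control_system G T U f \<longleftrightarrow>
     (\<forall>g\<in>carrier G. \<forall>u\<in>U. f g u \<in> carrier G) \<and>
     continuous_map (prod_topology T (subtopology euclidean U)) T (\<lambda>(g, u). f g u) \<and>
     (\<lambda>g. f g 0) \<in> iso G G \<and>
     homeomorphic_map T T (\<lambda>g. f g 0) \<and>
     (\<forall>g\<in>carrier G. \<forall>u\<in>U. f g u = f \<one>\<^bsub>G\<^esub> u \<otimes>\<^bsub>G\<^esub> f g 0)"

primrec phi :: "('g \<Rightarrow> 'c \<Rightarrow> 'g) \<Rightarrow> nat \<Rightarrow> 'g \<Rightarrow> (nat \<Rightarrow> 'c) \<Rightarrow> 'g" where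
  "phi f 0 g u = g"
| "phi f (Suc k) g u = f (phi f k g u) (u k)"

definition reach_set :: "('g, 'b) monoid_scheme \<Rightarrow> 'c set \<Rightarrow> ('g \<Rightarrow> 'c \<Rightarrow> 'g) \<Rightarrow> 'g set" where
  "reach_set G U f = {phi f k \<one>\<^bsub>G\<^esub> u | k u. k \<ge> 1 \<and> (\<forall>i. u i \<in> U)}"

definition f0_pow :: "('g, 'b) monoid_scheme \<Rightarrow> ('g \<Rightarrow> 'g) \<Rightarrow> int \<Rightarrow> 'g \<Rightarrow> 'g" where
  "f0_pow G f0 k g = (if k \<ge> 0 then (f0 ^^ nat k) g
                      else (inv_into (carrier G) f0 ^^ nat (- k)) g)"

end

theory Submission
  imports Defs
begin

lemma phi_carrier:
  assumes "group G" "\<forall>g\<in>carrier G. \<forall>u\<in>U. f g u \<in> carrier G" "\<forall>i. u i \<in> U" "x \<in> carrier G"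
  shows "phi f k x u \<in> carrier G"
  using assms by (induction k) auto

lemma phi_concat:
  "phi f (j + k) x (\<lambda>i. if i < j then v i else u (i - j)) = phi f k (phi f j x v) u"
proof (induction k)
  case 0
  have "m \<le> j \<Longrightarrow> phi f m x (\<lambda>i. if i < j then v i else u (i - j)) = phi f m x v" for m
    by (induction m) auto
  then show ?case by simp
next
  case (Suc k) then show ?case by simp
qed

lemma phi_split:
  assumes grp: "group G" and cl: "\<forall>g\<in>carrier G. \<forall>u\<in>U. f g u \<in> carrier G"
    and hom: "(\<lambda>g. f g 0) \<in> hom G G"
    and lin: "\<forall>g\<in>carrier G. \<forall>u\<in>U. f g u = f \<one>\<^bsub>G\<^esub> u \<otimes>\<^bsub>G\<^esub> f g 0"
    and u: "\<forall>i. u i \<in> U" and x: "x \<in> carrier G"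
  shows "phi f k x u = phi f k \<one>\<^bsub>G\<^esub> u \<otimes>\<^bsub>G\<^esub> ((\<lambda>g. f g 0) ^^ k) x"
proof (induction k)
  case 0 then show ?case using grp x by (simp add: group.is_monoid monoid.l_one)
next
  case (Suc k)
  interpret group G by fact
  have f0c: "\<And>y. y \<in> carrier G \<Longrightarrow> f y 0 \<in> carrier G" using hom by (auto simp: hom_def)
  have pc: "\<And>y. y \<in> carrier G \<Longrightarrow> phi f k y u \<in> carrier G"
    using phi_carrier[OF grp cl u] by blast
  have powc: "\<And>n. ((\<lambda>g. f g 0) ^^ n) x \<in> carrier G"
    subgoal for n by (induction n) (auto simp: x f0c)
    done
  have fuc: "f \<one>\<^bsub>G\<^esub> (u k) \<in> carrier G" using cl u by auto
  have "phi f (Suc k) x u = f \<one>\<^bsub>G\<^esub> (u k) \<otimes>\<^bsub>G\<^esub> f (phi f k x u) 0"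
    using lin[rule_format, OF pc[OF x] u[rule_format, of k]] by simp
  also have "f (phi f k x u) 0 = f (phi f k \<one>\<^bsub>G\<^esub> u) 0 \<otimes>\<^bsub>G\<^esub> f (((\<lambda>g. f g 0) ^^ k) x) 0"
    using Suc hom_mult[OF hom pc[OF one_closed] powc[of k]] by simp
  also have "f \<one>\<^bsub>G\<^esub> (u k) \<otimes>\<^bsub>G\<^esub> (f (phi f k \<one>\<^bsub>G\<^esub> u) 0 \<otimes>\<^bsub>G\<^esub> f (((\<lambda>g. f g 0) ^^ k) x) 0)
     = (f \<one>\<^bsub>G\<^esub> (u k) \<otimes>\<^bsub>G\<^esub> f (phi f k \<one>\<^bsub>G\<^esub> u) 0) \<otimes>\<^bsub>G\<^esub> f (((\<lambda>g. f g 0) ^^ k) x) 0"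
    using fuc f0c pc[OF one_closed] powc[of k] by (simp add: m_assoc)
  also have "f \<one>\<^bsub>G\<^esub> (u k) \<otimes>\<^bsub>G\<^esub> f (phi f k \<one>\<^bsub>G\<^esub> u) 0 = phi f (Suc k) \<one>\<^bsub>G\<^esub> u"
    using lin[rule_format, OF pc[OF one_closed] u[rule_format, of k]] by simp
  finally show ?case by simp
qed

lemma pow_inv:
  assumes "bij_betw f0 A A" "y \<in> A"
  shows "(f0 ^^ n) ((inv_into A f0 ^^ n) y) = y \<and> (inv_into A f0 ^^ n) y \<in> A"
proof (induction n)
  case 0 then show ?case using assms by simp
next
  case (Suc n)
  let ?z = "(inv_into A f0 ^^ n) y"
  have zA: "?z \<in> A" using Suc by blast
  have "(f0 ^^ Suc n) ((inv_into A f0 ^^ Suc n) y) = (f0 ^^ Suc n) (inv_into A f0 ?z)"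
    by simp
  also have "\<dots> = (f0 ^^ n) (f0 (inv_into A f0 ?z))"
    by (simp only: funpow_Suc_right comp_def)
  also have "f0 (inv_into A f0 ?z) = ?z"
    using assms(1) zA by (metis bij_betw_imp_surj_on f_inv_into_f)
  finally have 1: "(f0 ^^ Suc n) ((inv_into A f0 ^^ Suc n) y) = y" using Suc by simp
  have "inv_into A f0 ?z \<in> A"
    using assms(1) zA by (metis bij_betw_imp_surj_on inv_into_into)
  then show ?case using 1 by simp
qed

theorem lemma2p15:
  fixes G :: "('g, 'b) monoid_scheme" and T :: "'g topology"
    and U :: "(real^'m) set" and f :: "'g \<Rightarrow> real^'m \<Rightarrow> 'g" and g :: 'g
  assumes "connected_loc_euclidean_group G T TYPE('n::finite)"
    and "compact U" and "0 \<in> interior U"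
    and "linear_control_system G T U f"
    and "g \<in> reach_set G U f"
    and "\<forall>k::int. f0_pow G (\<lambda>x. f x 0) k g \<in> reach_set G U f"
  shows "(\<lambda>h. h \<otimes>\<^bsub>G\<^esub> g) ` reach_set G U f \<subseteq> reach_set G U f"
proof
  have grp: "group G" using assms(1) by (simp add: connected_loc_euclidean_group_def)
  have cl: "\<forall>g\<in>carrier G. \<forall>u\<in>U. f g u \<in> carrier G"
    and iso: "(\<lambda>g. f g 0) \<in> iso G G"
    and lin: "\<forall>g\<in>carrier G. \<forall>u\<in>U. f g u = f \<one>\<^bsub>G\<^esub> u \<otimes>\<^bsub>G\<^esub> f g 0"
    using assms(4) by (auto simp: linear_control_system_def)
  have hom: "(\<lambda>g. f g 0) \<in> hom G G" and bij: "bij_betw (\<lambda>g. f g 0) (carrier G) (carrier G)"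
    using iso by (auto simp: iso_def)
  have one: "\<one>\<^bsub>G\<^esub> \<in> carrier G" using grp by (simp add: group.is_monoid monoid.one_closed)
  have Rc: "y \<in> carrier G" if "y \<in> reach_set G U f" for y
    using that phi_carrier[OF grp cl _ one] by (auto simp: reach_set_def)
  fix y assume "y \<in> (\<lambda>h. h \<otimes>\<^bsub>G\<^esub> g) ` reach_set G U f"
  then obtain k u where y: "y = phi f k \<one>\<^bsub>G\<^esub> u \<otimes>\<^bsub>G\<^esub> g" and k: "k \<ge> 1" and u: "\<forall>i. u i \<in> U"
    by (auto simp: reach_set_def)
  have gc: "g \<in> carrier G" using Rc assms(5) by blast
  let ?x = "(inv_into (carrier G) (\<lambda>g. f g 0) ^^ k) g"
  have "f0_pow G (\<lambda>x. f x 0) (- int k) g = ?x" using k by (simp add: f0_pow_def)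
  then have "?x \<in> reach_set G U f" using assms(6) by metis
  then obtain j v where xj: "?x = phi f j \<one>\<^bsub>G\<^esub> v" and j: "j \<ge> 1" and v: "\<forall>i. v i \<in> U"
    by (auto simp: reach_set_def)
  have pi: "((\<lambda>g. f g 0) ^^ k) ?x = g" "?x \<in> carrier G" using pow_inv[OF bij gc] by auto
  have "phi f k ?x u = y"
    using phi_split[OF grp cl hom lin u pi(2)] pi(1) y by simp
  then have "y = phi f (j + k) \<one>\<^bsub>G\<^esub> (\<lambda>i. if i < j then v i else u (i - j))"
    using phi_concat xj by metis
  moreover have "\<forall>i. (if i < j then v i else u (i - j)) \<in> U" using u v by auto
  ultimately show "y \<in> reach_set G U f" unfolding reach_set_def using j
    by (intro CollectI exI[of _ "j + k"] exI[of _ "\<lambda>i. if i < j then v i else u (i - j)"]) auto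
qed

end
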